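(* The following four vertex-weighted multigraphs, all of which are simple graphs (at most one edge between any two vertices) with every vertex of weight $2$, are admissibly contractible: $K_1$, the complete graph on 5 vertices; $K_2$, the graph on vertices $v_1,\dots,v_6$ with edges $v_1v_2,v_1v_3,v_1v_5,v_1v_6,v_2v_3,v_2v_4,v_2v_6,v_3v_4,v_3v_5,v_4v_5,v_4v_6,v_5v_6$ (the complete tripartite graph $K_{2,2,2}$); $K_3$, the graph on vertices $v_1,\dots,v_7$ in which $v_1$ is adjacent to all other vertices and, among $v_2,\dots,v_7$, each of $v_2,v_4,v_6$ is adjacent to each of $v_3,v_5,v_7$ and there are no other edges; $K_4$, the complete bipartite graph $K_{4,4}$ with parts $\{v_1,v_3,v_5,v_7\}$ and $\{v_2,v_4,v_6,v_8\}$.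
   Context: A vertex-weighted multigraph is a quadruple $G=(V,E,r,\mathrm{wt})$ with $V$ a finite set of vertices, $E$ a finite set of edges, $r$ assigning to each edge an unordered pair $\{v,w\}$ of distinct vertices, and $\mathrm{wt}:V\to\mathbb{Z}$. $\deg(v)$ is the number of edges incident to $v$. For adjacent vertices $v,w$, the contraction with respect to $\{v,w\}$ identifies $v,w$ to one vertex of weight $\mathrm{wt}(v)+\mathrm{wt}(w)$, deletes all edges between $v$ and $w$, and keeps all other edges (endpoints replaced via the identification) and weights. Let $m$ be the number of edges between $v$ and $w$. The contraction is admissible if, for some labeling of the pair as $v,w$, there is an integer $0\leq l<m$ with: every vertex $x\notin\{v,w\}$ has $\deg(x)\geq 3$; $\mathrm{wt}(v)\geq l+1$, $\mathrm{wt}(w)\geq l+2$; $\deg(v)-m+l\geq 3$ and $\deg(w)-m+l\geq3$. A vertex-weighted multigraph is admissibly contractible if a finite sequence of admissible contractions transforms it into a single vertex. *)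

theory Defs
  imports Main
begin

text \<open>Vertex-weighted multigraphs G = (V, E, r, wt).  The map r assigns to each
edge the unordered pair of its endpoints, represented as a two-element set.\<close>

record ('a, 'e) vwgraph =
  verts  :: "'a set"
  edges  :: "'e set"
  ends   :: "'e \<Rightarrow> 'a set"
  weight :: "'a \<Rightarrow> int"

definition vwgraph_wf :: "('a, 'e) vwgraph \<Rightarrow> bool" where
  "vwgraph_wf G \<longleftrightarrow> finite (verts G) \<and> finite (edges G) \<and>
     (\<forall>e\<in>edges G. \<exists>a b. a \<in> verts G \<and> b \<in> verts G \<and> a \<noteq> b \<and> ends G e = {a, b})"

definition vdeg :: "('a, 'e) vwgraph \<Rightarrow> 'a \<Rightarrow> nat" where
  "vdeg G x = card {e \<in> edges G. x \<in> ends G e}"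

definition emult :: "('a, 'e) vwgraph \<Rightarrow> 'a \<Rightarrow> 'a \<Rightarrow> nat" where
  "emult G v w = card {e \<in> edges G. ends G e = {v, w}}"

definition contract :: "('a, 'e) vwgraph \<Rightarrow> 'a \<Rightarrow> 'a \<Rightarrow> ('a, 'e) vwgraph" where
  "contract G v w =
     \<lparr> verts = verts G - {w},
       edges = {e \<in> edges G. ends G e \<noteq> {v, w}},
       ends = (\<lambda>e. (\<lambda>x. if x = w then v else x) ` ends G e),
       weight = (\<lambda>x. if x = v then weight G v + weight G w else weight G x) \<rparr>"

definition admissible_labelled :: "('a, 'e) vwgraph \<Rightarrow> 'a \<Rightarrow> 'a \<Rightarrow> bool" where
  "admissible_labelled G v w \<longleftrightarrow>
     (\<exists>l::nat. l < emult G v w \<and>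
        (\<forall>x \<in> verts G - {v, w}. vdeg G x \<ge> 3) \<and>
        weight G v \<ge> int l + 1 \<and> weight G w \<ge> int l + 2 \<and>
        int (vdeg G v) - int (emult G v w) + int l \<ge> 3 \<and>
        int (vdeg G w) - int (emult G v w) + int l \<ge> 3)"

definition admissible_contraction :: "('a, 'e) vwgraph \<Rightarrow> 'a \<Rightarrow> 'a \<Rightarrow> bool" where
  "admissible_contraction G v w \<longleftrightarrow>
     v \<in> verts G \<and> w \<in> verts G \<and> v \<noteq> w \<and> emult G v w > 0 \<and>
     (admissible_labelled G v w \<or> admissible_labelled G w v)"

inductive admissibly_contractible :: "('a, 'e) vwgraph \<Rightarrow> bool" where
  single: "vwgraph_wf G \<Longrightarrow> card (verts G) = 1 \<Longrightarrow> admissibly_contractible G"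
| step: "vwgraph_wf G \<Longrightarrow> admissible_contraction G v w \<Longrightarrow>
         admissibly_contractible (contract G v w) \<Longrightarrow> admissibly_contractible G"

definition simple_w2 :: "nat set \<Rightarrow> nat set set \<Rightarrow> (nat, nat set) vwgraph" where
  "simple_w2 V E = \<lparr> verts = V, edges = E, ends = id, weight = (\<lambda>_. 2) \<rparr>"

definition graphK1 :: "(nat, nat set) vwgraph" where
  "graphK1 = simple_w2 {1..5} {{a, b} | a b. a \<in> {1..5} \<and> b \<in> {1..5} \<and> a \<noteq> b}"

definition graphK2 :: "(nat, nat set) vwgraph" where
  "graphK2 = simple_w2 {1..6}
     {{1,2},{1,3},{1,5},{1,6},{2,3},{2,4},{2,6},{3,4},{3,5},{4,5},{4,6},{5,6}}"

definition graphK3 :: "(nat, nat set) vwgraph" where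
  "graphK3 = simple_w2 {1..7}
     ({{1, k} | k. k \<in> {2..7}} \<union> {{a, b} | a b. a \<in> {2,4,6} \<and> b \<in> {3,5,7}})"

definition graphK4 :: "(nat, nat set) vwgraph" where
  "graphK4 = simple_w2 {1..8} {{a, b} | a b. a \<in> {1,3,5,7} \<and> b \<in> {2,4,6,8}}"

end

theory Submission imports Defs begin

definition filt :: "('a \<Rightarrow> bool) \<Rightarrow> 'a set \<Rightarrow> 'a set" where "filt P A = {x\<in>A. P x}"

lemma filt_in: "P a \<Longrightarrow> filt P (insert a A) = insert a (filt P A)" by (auto simp: filt_def)
lemma filt_out: "\<not> P a \<Longrightarrow> filt P (insert a A) = filt P A" by (auto simp: filt_def)
lemma filt_empty: "filt P {} = {}" by (auto simp: filt_def)

lemma vdeg': "vdeg G x = card (filt (\<lambda>e. x \<in> ends G e) (edges G))"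
  unfolding vdeg_def filt_def by simp
lemma emult': "emult G v w = card (filt (\<lambda>e. ends G e = {v,w}) (edges G))"
  unfolding emult_def filt_def by simp
lemma contract': "contract G v w =
     \<lparr> verts = verts G - {w},
       edges = filt (\<lambda>e. ends G e \<noteq> {v, w}) (edges G),
       ends = (\<lambda>e. (\<lambda>x. if x = w then v else x) ` ends G e),
       weight = (\<lambda>x. if x = v then weight G v + weight G w else weight G x) \<rparr>"
  unfolding contract_def filt_def by simp

definition mkG :: "'a set \<Rightarrow> 'a set set \<Rightarrow> ('a \<Rightarrow> 'a) \<Rightarrow> ('a \<Rightarrow> int) \<Rightarrow> ('a, 'a set) vwgraph" where
  "mkG V E h W = \<lparr> verts = V, edges = E, ends = (\<lambda>e. h ` e), weight = W \<rparr>"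

definition ren :: "'a \<Rightarrow> 'a \<Rightarrow> 'a \<Rightarrow> 'a" where "ren v w x = (if x = w then v else x)"

lemma mkG_sel [simp]: "verts (mkG V E h W) = V" "edges (mkG V E h W) = E"
  "ends (mkG V E h W) e = h ` e" "weight (mkG V E h W) = W"
  by (simp_all add: mkG_def)

lemma contract_mkG: "contract (mkG V E h W) v w =
   mkG (V - {w}) (filt (\<lambda>e. h ` e \<noteq> {v, w}) E) (ren v w \<circ> h) (W(v := W v + W w))"
  unfolding contract_def mkG_def filt_def ren_def by (auto simp: image_image fun_eq_iff)

lemma simple_mkG: "simple_w2 V E = mkG V E id (\<lambda>_. 2)"
  unfolding simple_w2_def mkG_def by simp

lemma ren_app: "ren v w x = (if x = w then v else x)" by (simp add: ren_def)

lemmas ss = vdeg' emult' filt_in filt_out filt_empty doubleton_eq_iff contract_mkG insert_Diff_if ren_app fun_upd_apply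


lemma wf_contract:
  assumes "vwgraph_wf G" "v \<in> verts G" "w \<in> verts G" "v \<noteq> w"
  shows "vwgraph_wf (contract G v w)"
  unfolding vwgraph_wf_def
proof (intro conjI ballI)
  show "finite (verts (contract G v w))" "finite (edges (contract G v w))"
    using assms(1) by (auto simp: contract_def vwgraph_wf_def)
next
  fix e assume e: "e \<in> edges (contract G v w)"
  define f where "f = (\<lambda>x. if x = w then v else x)"
  from e have e1: "e \<in> edges G" and e2: "ends G e \<noteq> {v, w}" by (auto simp: contract_def)
  then obtain a b where ab: "a \<in> verts G" "b \<in> verts G" "a \<noteq> b" "ends G e = {a, b}"
    using assms(1) unfolding vwgraph_wf_def by blast
  have "f a \<noteq> f b"
  proof
    assume h: "f a = f b"
    have "a = w \<or> b = w" using h ab(3) unfolding f_def by (auto split: if_splits)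
    moreover have "a = v \<or> b = v" using h ab(3) unfolding f_def by (auto split: if_splits)
    ultimately have "{a, b} = {v, w}" using ab(3) assms(4) by auto
    then show False using e2 ab(4) by simp
  qed
  moreover have "f a \<in> verts (contract G v w)" "f b \<in> verts (contract G v w)"
    using ab assms unfolding f_def by (auto simp: contract_def)
  moreover have "ends (contract G v w) e = {f a, f b}"
    using ab unfolding f_def by (simp add: contract_def)
  ultimately show "\<exists>a b. a \<in> verts (contract G v w) \<and> b \<in> verts (contract G v w) \<and> a \<noteq> b \<and>
      ends (contract G v w) e = {a, b}" by (intro exI conjI)
qed

lemma stepC:
  assumes "vwgraph_wf G" "admissible_contraction G v w"
    "vwgraph_wf (contract G v w) \<Longrightarrow> admissibly_contractible (contract G v w)"
  shows "admissibly_contractible G"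
proof -
  have "v \<in> verts G" "w \<in> verts G" "v \<noteq> w" using assms(2) unfolding admissible_contraction_def by simp_all
  then have "vwgraph_wf (contract G v w)" by (rule wf_contract[OF assms(1)])
  then have "admissibly_contractible (contract G v w)" by (rule assms(3))
  then show ?thesis by (rule admissibly_contractible.step[OF assms(1,2)])
qed

lemma adm_I1:
  assumes "v \<in> verts G" "w \<in> verts G" "v \<noteq> w" "emult G v w = m" "l < m"
    "\<forall>x\<in>verts G - {v, w}. 3 \<le> vdeg G x" "int l + 1 \<le> weight G v" "int l + 2 \<le> weight G w"
    "3 \<le> int (vdeg G v) - int m + int l" "3 \<le> int (vdeg G w) - int m + int l"
  shows "admissible_contraction G v w"
proof -
  have "admissible_labelled G v w" unfolding admissible_labelled_def
    apply (rule exI[of _ l])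
    apply (simp only: assms(4))
    using assms(5-10) by blast
  then show ?thesis unfolding admissible_contraction_def using assms(1-5) by simp
qed

lemma adm_I2:
  assumes "v \<in> verts G" "w \<in> verts G" "v \<noteq> w" "emult G w v = m" "l < m"
    "\<forall>x\<in>verts G - {v, w}. 3 \<le> vdeg G x" "int l + 1 \<le> weight G w" "int l + 2 \<le> weight G v"
    "3 \<le> int (vdeg G w) - int m + int l" "3 \<le> int (vdeg G v) - int m + int l"
  shows "admissible_contraction G v w"
proof -
  have e: "emult G v w = emult G w v" unfolding emult_def by (simp add: insert_commute)
  have "verts G - {w, v} = verts G - {v, w}" by (simp add: insert_commute)
  then have "admissible_labelled G w v" unfolding admissible_labelled_def
    apply -
    apply (rule exI[of _ l])
    apply (simp only: assms(4) \<open>verts G - {w, v} = verts G - {v, w}\<close>)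
    using assms(5-10) by blast
  then show ?thesis unfolding admissible_contraction_def using assms(1-5) e by simp
qed

lemma cmp2: "{{a,b} | a b. a \<in> A \<and> b \<in> B \<and> P a b} = (\<Union>a\<in>A. \<Union>b\<in>B. if P a b then {{a,b}} else {})"
  by (auto split: if_splits)
lemma cmp2': "{{a,b} | a b. a \<in> A \<and> b \<in> B} = (\<Union>a\<in>A. \<Union>b\<in>B. {{a,b}})"
  by auto
lemma cmp1: "{{c,k} | k. k \<in> A} = (\<lambda>k. {c,k}) ` A"
  by auto
lemma iv: "{1..5::nat} = {1,2,3,4,5}" "{1..6::nat} = {1,2,3,4,5,6}" "{1..7::nat} = {1,2,3,4,5,6,7}"
  "{1..8::nat} = {1,2,3,4,5,6,7,8}" "{2..7::nat} = {2,3,4,5,6,7}" by auto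

lemma wf_simple: "finite V \<Longrightarrow> finite E \<Longrightarrow> (\<forall>e\<in>E. \<exists>a b. e = {a,b} \<and> a\<in>V \<and> b\<in>V \<and> a\<noteq>b) \<Longrightarrow> vwgraph_wf (simple_w2 V E)"
  unfolding vwgraph_wf_def simple_w2_def by fastforce

lemma K1_eq: "graphK1 = simple_w2 {1,2,3,4,5} {{1,2},{1,3},{1,4},{1,5},{2,3},{2,4},{2,5},{3,4},{3,5},{4,5}}"
  unfolding graphK1_def cmp2 cmp2' cmp1 iv
  apply (rule arg_cong2[where f=simple_w2], rule refl)
  apply (simp add: insert_commute)
  done

lemma K1_wf: "vwgraph_wf graphK1"
  unfolding K1_eq
  apply (rule wf_simple)
    apply simp
   apply simp
  apply (simp only: ball_simps)
  apply (intro conjI TrueI)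
  apply (rule exI, rule exI, rule conjI, rule refl, simp)+
  done

lemma K1_ac_aux: "vwgraph_wf graphK1 \<Longrightarrow> admissibly_contractible graphK1"
  unfolding K1_eq simple_mkG
  apply (rule stepC[where v=1 and w=2], assumption)
   apply (rule adm_I1[where l=0 and m=1]; simp (no_asm) add: ss del: if_image_distrib)
  apply (rule stepC[where v=1 and w=3], assumption)
   apply (rule adm_I2[where l=1 and m=2]; simp (no_asm) add: ss del: if_image_distrib)
  apply (rule stepC[where v=4 and w=5], assumption)
   apply (rule adm_I1[where l=0 and m=1]; simp (no_asm) add: ss del: if_image_distrib)
  apply (rule stepC[where v=1 and w=4], assumption)
   apply (rule adm_I2[where l=3 and m=6]; simp (no_asm) add: ss del: if_image_distrib)
  apply (rule single, assumption, simp (no_asm) add: ss del: if_image_distrib)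
  done

lemma K1_ac: "admissibly_contractible graphK1"
  using K1_ac_aux K1_wf .

lemma K2_eq: "graphK2 = simple_w2 {1,2,3,4,5,6} {{1,2},{1,3},{1,5},{1,6},{2,3},{2,4},{2,6},{3,4},{3,5},{4,5},{4,6},{5,6}}"
  unfolding graphK2_def cmp2 cmp2' cmp1 iv
  apply (rule arg_cong2[where f=simple_w2], rule refl)
  apply (simp add: insert_commute)
  done

lemma K2_wf: "vwgraph_wf graphK2"
  unfolding K2_eq
  apply (rule wf_simple)
    apply simp
   apply simp
  apply (simp only: ball_simps)
  apply (intro conjI TrueI)
  apply (rule exI, rule exI, rule conjI, rule refl, simp)+
  done

lemma K2_ac_aux: "vwgraph_wf graphK2 \<Longrightarrow> admissibly_contractible graphK2"
  unfolding K2_eq simple_mkG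
  apply (rule stepC[where v=1 and w=2], assumption)
   apply (rule adm_I1[where l=0 and m=1]; simp (no_asm) add: ss del: if_image_distrib)
  apply (rule stepC[where v=1 and w=3], assumption)
   apply (rule adm_I2[where l=1 and m=2]; simp (no_asm) add: ss del: if_image_distrib)
  apply (rule stepC[where v=1 and w=4], assumption)
   apply (rule adm_I2[where l=1 and m=2]; simp (no_asm) add: ss del: if_image_distrib)
  apply (rule stepC[where v=5 and w=6], assumption)
   apply (rule adm_I1[where l=0 and m=1]; simp (no_asm) add: ss del: if_image_distrib)
  apply (rule stepC[where v=1 and w=5], assumption)
   apply (rule adm_I2[where l=3 and m=6]; simp (no_asm) add: ss del: if_image_distrib)
  apply (rule single, assumption, simp (no_asm) add: ss del: if_image_distrib)
  done

lemma K2_ac: "admissibly_contractible graphK2"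
  using K2_ac_aux K2_wf .

lemma K3_eq: "graphK3 = simple_w2 {1,2,3,4,5,6,7} {{1,2},{1,3},{1,4},{1,5},{1,6},{1,7},{2,3},{2,5},{2,7},{3,4},{3,6},{4,5},{4,7},{5,6},{6,7}}"
  unfolding graphK3_def cmp2 cmp2' cmp1 iv
  apply (rule arg_cong2[where f=simple_w2], rule refl)
  apply (simp add: insert_commute)
  done

lemma K3_wf: "vwgraph_wf graphK3"
  unfolding K3_eq
  apply (rule wf_simple)
    apply simp
   apply simp
  apply (simp only: ball_simps)
  apply (intro conjI TrueI)
  apply (rule exI, rule exI, rule conjI, rule refl, simp)+
  done

lemma K3_ac_aux: "vwgraph_wf graphK3 \<Longrightarrow> admissibly_contractible graphK3"
  unfolding K3_eq simple_mkG
  apply (rule stepC[where v=1 and w=2], assumption)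
   apply (rule adm_I1[where l=0 and m=1]; simp (no_asm) add: ss del: if_image_distrib)
  apply (rule stepC[where v=1 and w=3], assumption)
   apply (rule adm_I2[where l=1 and m=2]; simp (no_asm) add: ss del: if_image_distrib)
  apply (rule stepC[where v=1 and w=4], assumption)
   apply (rule adm_I2[where l=1 and m=2]; simp (no_asm) add: ss del: if_image_distrib)
  apply (rule stepC[where v=5 and w=6], assumption)
   apply (rule adm_I1[where l=0 and m=1]; simp (no_asm) add: ss del: if_image_distrib)
  apply (rule stepC[where v=5 and w=7], assumption)
   apply (rule adm_I1[where l=0 and m=1]; simp (no_asm) add: ss del: if_image_distrib)
  apply (rule stepC[where v=1 and w=5], assumption)
   apply (rule adm_I1[where l=3 and m=8]; simp (no_asm) add: ss del: if_image_distrib)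
  apply (rule single, assumption, simp (no_asm) add: ss del: if_image_distrib)
  done

lemma K3_ac: "admissibly_contractible graphK3"
  using K3_ac_aux K3_wf .

lemma K4_eq: "graphK4 = simple_w2 {1,2,3,4,5,6,7,8} {{1,2},{1,4},{1,6},{1,8},{2,3},{2,5},{2,7},{3,4},{3,6},{3,8},{4,5},{4,7},{5,6},{5,8},{6,7},{7,8}}"
  unfolding graphK4_def cmp2 cmp2' cmp1 iv
  apply (rule arg_cong2[where f=simple_w2], rule refl)
  apply (simp add: insert_commute)
  done

lemma K4_wf: "vwgraph_wf graphK4"
  unfolding K4_eq
  apply (rule wf_simple)
    apply simp
   apply simp
  apply (simp only: ball_simps)
  apply (intro conjI TrueI)
  apply (rule exI, rule exI, rule conjI, rule refl, simp)+
  done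

lemma K4_ac_aux: "vwgraph_wf graphK4 \<Longrightarrow> admissibly_contractible graphK4"
  unfolding K4_eq simple_mkG
  apply (rule stepC[where v=1 and w=2], assumption)
   apply (rule adm_I1[where l=0 and m=1]; simp (no_asm) add: ss del: if_image_distrib)
  apply (rule stepC[where v=1 and w=3], assumption)
   apply (rule adm_I1[where l=0 and m=1]; simp (no_asm) add: ss del: if_image_distrib)
  apply (rule stepC[where v=1 and w=4], assumption)
   apply (rule adm_I2[where l=1 and m=2]; simp (no_asm) add: ss del: if_image_distrib)
  apply (rule stepC[where v=1 and w=5], assumption)
   apply (rule adm_I2[where l=1 and m=2]; simp (no_asm) add: ss del: if_image_distrib)
  apply (rule stepC[where v=6 and w=7], assumption)
   apply (rule adm_I1[where l=0 and m=1]; simp (no_asm) add: ss del: if_image_distrib)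
  apply (rule stepC[where v=6 and w=8], assumption)
   apply (rule adm_I1[where l=0 and m=1]; simp (no_asm) add: ss del: if_image_distrib)
  apply (rule stepC[where v=1 and w=6], assumption)
   apply (rule adm_I1[where l=3 and m=8]; simp (no_asm) add: ss del: if_image_distrib)
  apply (rule single, assumption, simp (no_asm) add: ss del: if_image_distrib)
  done

lemma K4_ac: "admissibly_contractible graphK4"
  using K4_ac_aux K4_wf .

theorem proposition3p5:
  shows "admissibly_contractible graphK1 \<and> admissibly_contractible graphK2 \<and>
         admissibly_contractible graphK3 \<and> admissibly_contractible graphK4"
  using K1_ac K2_ac K3_ac K4_ac by blast

end
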